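(* Let $G$ be a transitively closed directed acyclic graph on $[n]$ with $G^{un}$ connected. A subgraph $H\subseteq G$ gives a facet $Q_H$ of $\tilde Q_G$ (not containing the origin) if and only if $H^{un}$ is connected and $H=G_{L,R}$ for some partition $[n]=L\sqcup R$.
   Context: Conventions: $G$ is a directed acyclic graph with vertex set $[n]$, every edge $(i,j)$ satisfying $i<j$; subgraphs $H\subseteq G$ have $V(H)=[n]$, $E(H)\subseteq E(G)$; $^{un}$ denotes underlying undirected graph. $Q_H=\mathrm{conv}\{\mathbf e_i-\mathbf e_j:(i,j)\in E(H)\}$, $\tilde Q_G=\mathrm{conv}(\{\mathbf 0\}\cup\{\mathbf e_i-\mathbf e_j:(i,j)\in E(G)\})$ in $\mathbb R^n$. $G$ is transitively closed if $(i,j),(j,k)\in E(G)$ implies $(i,k)\in E(G)$. For disjoint $L,R\subseteq[n]$, $G_{L,R}$ is the subgraph with edge set $\{(i,j)\in E(G):i\in L,j\in R\}$. A facet is a face of codimension 1. *)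

theory Defs
  imports "HOL-Analysis.Analysis"
begin

text \<open>Vertices are the elements of a finite linearly ordered type 'n (standing for [n]);
  a directed graph on [n] is given by its edge set E; a subgraph is given by a subset of edges
  (vertex set always all of 'n).\<close>

definition dag_ordered :: "('n::linorder \<times> 'n) set \<Rightarrow> bool" where
  "dag_ordered E \<longleftrightarrow> (\<forall>(i,j)\<in>E. i < j)"

definition trans_closed :: "('n \<times> 'n) set \<Rightarrow> bool" where
  "trans_closed E \<longleftrightarrow> (\<forall>i j k. (i,j) \<in> E \<and> (j,k) \<in> E \<longrightarrow> (i,k) \<in> E)"

definition un_connected :: "('n \<times> 'n) set \<Rightarrow> bool" where
  "un_connected E \<longleftrightarrow> (\<forall>u v. (u, v) \<in> (E \<union> E\<inverse>)\<^sup>*)"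

definition Q_poly :: "('n::finite \<times> 'n) set \<Rightarrow> (real^'n) set" where
  "Q_poly E = convex hull {axis i 1 - axis j 1 | i j. (i,j) \<in> E}"

definition Q_tilde :: "('n::finite \<times> 'n) set \<Rightarrow> (real^'n) set" where
  "Q_tilde E = convex hull (insert 0 {axis i 1 - axis j 1 | i j. (i,j) \<in> E})"

definition G_LR :: "('n \<times> 'n) set \<Rightarrow> 'n set \<Rightarrow> 'n set \<Rightarrow> ('n \<times> 'n) set" where
  "G_LR E L R = {(i,j) \<in> E. i \<in> L \<and> j \<in> R}"

text \<open>Facet as in the paper: a face of codimension 1. (Differs from the library's
  facet_of only in not excluding the empty face, which matters only when n = 1.)\<close>
definition is_facet :: "(real^'n) set \<Rightarrow> (real^'n) set \<Rightarrow> bool" where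
  "is_facet F P \<longleftrightarrow> F face_of P \<and> aff_dim F = aff_dim P - 1"

end

theory Submission
  imports Defs
begin

definition VV :: "('n::finite \<times> 'n) set \<Rightarrow> (real^'n) set" where
  "VV E = (\<lambda>p. axis (fst p) 1 - axis (snd p) 1) ` E"

lemma VV_eq: "{axis i 1 - axis j 1 | i j. (i,j) \<in> E} = VV E"
  unfolding VV_def by force

lemma VV_finite: "finite (VV (E::('n::finite \<times> 'n) set))"
  unfolding VV_def by simp

lemma inner_gen: "(a::real^'n::finite) \<bullet> (axis i 1 - axis j 1) = a$i - a$j"
  by (simp add: inner_diff_right inner_axis)

lemma aff_dim_insert0: "aff_dim (insert 0 (V::(real^'n::finite) set)) = int (dim V)"
proof -
  have "0 \<in> affine hull (insert 0 V)" by (simp add: hull_inc)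
  then have "aff_dim (insert 0 V) = int (dim ((+) (- 0) ` (insert 0 V)))"
    by (rule aff_dim_eq_dim)
  also have "\<dots> = int (dim (insert 0 V))" by simp
  also have "\<dots> = int (dim V)" by (simp add: dim_insert span_zero)
  finally show ?thesis .
qed

lemma aff_dim_hyp:
  assumes "V \<subseteq> {x::real^'n::finite. c \<bullet> x = 1}"
  shows "aff_dim V = int (dim V) - 1"
proof -
  have "affine hull V \<subseteq> {x. c \<bullet> x = 1}"
    using assms by (intro hull_minimal) (auto simp: affine_hyperplane)
  then have "0 \<notin> affine hull V" by auto
  then have "aff_dim (insert 0 V) = aff_dim V + 1" by (simp add: aff_dim_insert)
  then show ?thesis using aff_dim_insert0[of V] by simp
qed

lemma gen_span:
  assumes "un_connected E"
  shows "axis u 1 - axis v 1 \<in> span (VV (E::('n::finite \<times> 'n) set))"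
proof -
  have "(u,v) \<in> (E \<union> E\<inverse>)\<^sup>*" using assms unfolding un_connected_def by blast
  then show ?thesis
  proof (induction rule: rtrancl_induct)
    case base
    then show ?case by (simp add: span_zero)
  next
    case (step w v)
    have eq: "axis u 1 - axis v 1 = (axis u 1 - axis w 1) + (axis w 1 - axis v (1::real))"
      by simp
    have "axis w 1 - axis v (1::real) \<in> span (VV E)"
    proof (cases "(w,v) \<in> E")
      case True
      then have "axis w 1 - axis v (1::real) \<in> VV E" unfolding VV_def by force
      then show ?thesis by (rule span_base)
    next
      case False
      then have "(v,w) \<in> E" using step.hyps(2) by auto
      then have "axis v 1 - axis w (1::real) \<in> VV E" unfolding VV_def by force
      then have "- (axis v 1 - axis w (1::real)) \<in> span (VV E)" by (intro span_neg span_base)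
      then show ?thesis by simp
    qed
    then show ?case using step.IH eq by (metis span_add)
  qed
qed

definition one_vec :: "real^'n::finite" where "one_vec = (\<chi> i. 1)"

lemma one_vec_nz: "one_vec \<noteq> 0"
  by (simp add: one_vec_def vec_eq_iff)

lemma one_vec_gen: "one_vec \<bullet> (axis i 1 - axis j 1) = 0"
  by (simp add: inner_gen one_vec_def)

lemma dim_hyp_one: "dim {x::real^'n::finite. one_vec \<bullet> x = 0} = CARD('n) - 1"
  using dim_hyperplane[OF one_vec_nz] by simp

lemma span_conn:
  assumes "un_connected E"
  shows "span (VV (E::('n::finite \<times> 'n) set)) = {x. one_vec \<bullet> x = 0}"
proof
  show "span (VV E) \<subseteq> {x. one_vec \<bullet> x = 0}"
    by (intro span_minimal) (auto simp: VV_def one_vec_gen subspace_hyperplane)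
next
  show "{x. one_vec \<bullet> x = 0} \<subseteq> span (VV E)"
  proof
    fix x :: "real^'n" assume "x \<in> {x. one_vec \<bullet> x = 0}"
    then have s0: "(\<Sum>i\<in>UNIV. x$i) = 0" by (simp add: one_vec_def inner_vec_def)
    obtain v0 :: 'n where True by blast
    have "x = (\<Sum>i\<in>UNIV. x$i *\<^sub>R axis i 1) - (\<Sum>i\<in>UNIV. x$i) *\<^sub>R axis v0 1"
      using basis_expansion[of x] s0 by (simp add: scalar_mult_eq_scaleR)
    also have "\<dots> = (\<Sum>i\<in>UNIV. x$i *\<^sub>R (axis i 1 - axis v0 1))"
      by (simp add: scaleR_diff_right sum_subtractf scaleR_sum_left)
    also have "\<dots> \<in> span (VV E)"
      by (intro span_sum span_scale gen_span assms)
    finally show "x \<in> span (VV E)" .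
  qed
qed

lemma dim_conn:
  assumes "un_connected E"
  shows "dim (VV (E::('n::finite \<times> 'n) set)) = CARD('n) - 1"
  using span_conn[OF assms] dim_span[of "VV E"] dim_hyp_one by metis

lemma dim_disconn:
  assumes "\<not> un_connected H"
  shows "dim (VV (H::('n::finite \<times> 'n) set)) < CARD('n) - 1"
proof -
  obtain u v where uv: "(u,v) \<notin> (H \<union> H\<inverse>)\<^sup>*" using assms unfolding un_connected_def by blast
  define C where "C = {w. (u,w) \<in> (H \<union> H\<inverse>)\<^sup>*}"
  define a :: "real^'n" where "a = (\<chi> k. if k \<in> C then 1 else 0)"
  have cl: "i \<in> C \<longleftrightarrow> j \<in> C" if "(i,j) \<in> H" for i j
  proof
    assume "i \<in> C" then show "j \<in> C" using that unfolding C_def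
      by (simp add: rtrancl.rtrancl_into_rtrancl)
  next
    assume "j \<in> C" then show "i \<in> C" using that unfolding C_def
      by (simp add: rtrancl.rtrancl_into_rtrancl)
  qed
  have sub: "span (VV H) \<subseteq> {x::real^'n. one_vec \<bullet> x = 0} \<inter> {x. a \<bullet> x = 0}"
  proof (intro span_minimal)
    show "VV H \<subseteq> {x::real^'n. one_vec \<bullet> x = 0} \<inter> {x. a \<bullet> x = 0}"
      using cl by (auto simp: VV_def one_vec_def inner_gen a_def)
    show "subspace ({x::real^'n. one_vec \<bullet> x = 0} \<inter> {x. a \<bullet> x = 0})"
      by (intro subspace_inter subspace_hyperplane)
  qed
  have "u \<in> C" "v \<notin> C" using uv unfolding C_def by auto
  then have w: "axis u 1 - axis v 1 \<in> {x::real^'n. one_vec \<bullet> x = 0}" "a \<bullet> (axis u 1 - axis v 1) \<noteq> 0"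
    by (auto simp: one_vec_def inner_gen a_def)
  have ps: "span (VV H) \<subset> span {x::real^'n. one_vec \<bullet> x = (0::real)}"
    using sub w by (auto simp: span_eq_iff[THEN iffD2, OF subspace_hyperplane])
  have "dim (VV H) < dim {x::real^'n. one_vec \<bullet> x = (0::real)}" using dim_psubset[OF ps] .
  then show ?thesis using dim_hyp_one[where 'n='n] by simp
qed


lemma key:
  fixes i j :: "'n::{finite,linorder}"
  assumes "dag_ordered E" "H \<subseteq> E" "(i,j) \<in> E"
    and "axis i 1 - axis j 1 \<in> convex hull (VV H)"
  shows "(i,j) \<in> H"
proof (rule ccontr)
  assume nH: "(i,j) \<notin> H"
  define d where "d = axis i 1 - axis j (1::real)"
  have ij: "i < j" using assms(1,3) unfolding dag_ordered_def by auto
  have "VV H \<subseteq> {x. d \<bullet> x \<le> 1}"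
  proof
    fix x assume "x \<in> VV H"
    then obtain k l where kl: "(k,l) \<in> H" "x = axis k 1 - axis l 1" unfolding VV_def by auto
    have "k < l" using kl assms(1,2) unfolding dag_ordered_def by auto
    have "d \<bullet> x = d$k - d$l" unfolding kl(2) by (rule inner_gen)
    also have "\<dots> = ((if k=i then 1 else 0) - (if k=j then 1 else 0)) - ((if l=i then 1 else 0) - (if l=j then 1 else 0))"
      by (simp add: d_def axis_def)
    finally show "x \<in> {x. d \<bullet> x \<le> 1}" using kl nH ij \<open>k < l\<close> by auto
  qed
  then have "convex hull (VV H) \<subseteq> {x. d \<bullet> x \<le> 1}"
    by (intro hull_minimal) (auto simp: convex_halfspace_le)
  then have "d \<bullet> d \<le> 1" using assms(4) d_def by auto
  moreover have "d \<bullet> d = d$i - d$j" unfolding d_def by (rule inner_gen)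
  then have "d \<bullet> d = 2" using ij by (simp add: d_def axis_def)
  ultimately show False by simp
qed

lemma card1_eq: "CARD('n::finite) = 1 \<Longrightarrow> (u::'n) = v"
  by (metis card_1_singletonE singletonD UNIV_I)

theorem mainTheorem16:
  fixes E H :: "('n::{finite,linorder} \<times> 'n) set"
  assumes "dag_ordered E" and "trans_closed E" and "un_connected E"
    and "H \<subseteq> E"
  shows "(is_facet (Q_poly H) (Q_tilde E) \<and> 0 \<notin> Q_poly H) \<longleftrightarrow>
         (un_connected H \<and>
          (\<exists>L R. L \<inter> R = {} \<and> L \<union> R = UNIV \<and> H = G_LR E L R))"
proof -
  define P where "P = convex hull (insert 0 (VV E))"
  define F where "F = convex hull (VV H)"
  have QP: "Q_tilde E = P" unfolding P_def Q_tilde_def VV_eq ..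
  have QF: "Q_poly H = F" unfolding F_def Q_poly_def VV_eq ..
  have affP: "aff_dim P = int (CARD('n) - 1)"
    unfolding P_def aff_dim_convex_hull aff_dim_insert0 dim_conn[OF assms(3)] ..
  have cpos: "CARD('n) \<ge> 1" using card_gt_0_iff[of "UNIV::'n set"] by simp
  have VHsub: "VV H \<subseteq> VV E" using assms(4) unfolding VV_def by auto
  show ?thesis unfolding QP QF
  proof
    assume A: "is_facet F P \<and> 0 \<notin> F"
    then have fF: "F face_of P" and dF: "aff_dim F = aff_dim P - 1" and nz: "0 \<notin> F"
      unfolding is_facet_def by auto
    show "un_connected H \<and> (\<exists>L R. L \<inter> R = {} \<and> L \<union> R = UNIV \<and> H = G_LR E L R)"
    proof (cases "H = {}")
      case True
      then have "F = {}" unfolding F_def VV_def by simp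
      then have "CARD('n) - 1 = 0" using dF affP by simp
      then have c1: "CARD('n) = 1" using cpos by arith
      have "un_connected H" unfolding un_connected_def using card1_eq[OF c1] by (metis rtrancl.rtrancl_refl)
      moreover have "H = G_LR E UNIV {}" using True unfolding G_LR_def by simp
      ultimately show ?thesis by blast
    next
      case False
      then have Fne: "F \<noteq> {}" unfolding F_def VV_def by simp
      have "polyhedron P" unfolding P_def
        by (intro polytope_imp_polyhedron polytope_convex_hull) (simp add: VV_finite)
      then have "F exposed_face_of P" using fF exposed_face_of_polyhedron by blast
      then obtain a b where ab: "P \<subseteq> {x. a \<bullet> x \<le> b}" "F = P \<inter> {x. a \<bullet> x = b}"
        unfolding exposed_face_of_def by blast
      have zP: "0 \<in> P" unfolding P_def by (simp add: hull_inc)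
      then have "0 \<le> b" using ab by auto
      moreover have "b \<noteq> 0" using zP nz ab by auto
      ultimately have bpos: "b > 0" by simp
      define c where "c = (1/b) *\<^sub>R a"
      have cP: "c \<bullet> x \<le> 1" if "x \<in> P" for x
        using ab(1) that bpos by (auto simp: c_def divide_simps)
      have cF: "x \<in> F \<longleftrightarrow> x \<in> P \<and> c \<bullet> x = 1" for x
        using ab(2) bpos by (auto simp: c_def divide_simps)
      have genE: "axis i 1 - axis j 1 \<in> P" if "(i,j) \<in> E" for i j
        unfolding P_def using that by (intro hull_inc) (force simp: VV_def)
      have genH: "axis i 1 - axis j 1 \<in> F" if "(i,j) \<in> H" for i j
        unfolding F_def using that by (intro hull_inc) (force simp: VV_def)
      have cH: "c$i - c$j = 1" if "(i,j) \<in> H" for i j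
      proof -
        have "c \<bullet> (axis i 1 - axis j 1) = 1" using cF genH[OF that] by blast
        then show ?thesis by (simp add: inner_gen)
      qed
      have cE: "c$i - c$j \<le> 1" if "(i,j) \<in> E" for i j
      proof -
        have "c \<bullet> (axis i 1 - axis j 1) \<le> 1" using cP[OF genE[OF that]] by blast
        then show ?thesis by (simp add: inner_gen)
      qed
      have cEH: "(i,j) \<in> H" if "(i,j) \<in> E" "c$i - c$j = 1" for i j
      proof -
        have "c \<bullet> (axis i 1 - axis j 1) = 1" using that(2) by (simp add: inner_gen)
        then have "axis i 1 - axis j 1 \<in> F" using cF genE[OF that(1)] by blast
        then show ?thesis using key[OF assms(1) assms(4) that(1)] unfolding F_def by blast
      qed
      have "VV H \<subseteq> {x. c \<bullet> x = 1}" using cH unfolding VV_def by (auto simp: inner_gen)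
      then have "aff_dim F = int (dim (VV H)) - 1"
        unfolding F_def aff_dim_convex_hull by (rule aff_dim_hyp)
      then have "dim (VV H) = CARD('n) - 1" using dF affP cpos by simp
      then have conH: "un_connected H"
      proof -
        assume dd: "dim (VV H) = CARD('n) - 1"
        show "un_connected H"
        proof (rule ccontr)
          assume "\<not> un_connected H"
          from dim_disconn[OF this] show False using dd by simp
        qed
      qed
      define L where "L = {i. \<exists>j. (i,j) \<in> H}"
      have noLL: "j \<notin> L" if "(i,j) \<in> H" for i j
      proof
        assume "j \<in> L"
        then obtain k where k: "(j,k) \<in> H" unfolding L_def by auto
        then have "(i,k) \<in> E" using that assms(2,4) unfolding trans_closed_def by blast
        then show False using cE[of i k] cH[OF that] cH[OF k] by simp
      qed
      obtain u u' where uu: "(u,u') \<in> H" using False by auto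
      then have uL: "u \<in> L" unfolding L_def by auto
      have cval: "c$w = c$u - (if w \<in> L then 0 else 1)" for w
      proof -
        have "(u,w) \<in> (H \<union> H\<inverse>)\<^sup>*" using conH unfolding un_connected_def by blast
        then show ?thesis
        proof (induction rule: rtrancl_induct)
          case base then show ?case using uL by simp
        next
          case (step y z)
          from step.hyps(2) show ?case
          proof
            assume h: "(y,z) \<in> H"
            then have "y \<in> L" "z \<notin> L" using noLL unfolding L_def by auto
            then show ?case using step.IH cH[OF h] by simp
          next
            assume "(y,z) \<in> H\<inverse>"
            then have h: "(z,y) \<in> H" by simp
            then have "z \<in> L" "y \<notin> L" using noLL unfolding L_def by auto
            then show ?case using step.IH cH[OF h] by simp
          qed
        qed
      qed
      have "H = G_LR E L (- L)"
      proof
        show "H \<subseteq> G_LR E L (- L)"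
        proof
          fix p assume pH: "p \<in> H"
          then obtain i j where p: "p = (i,j)" by (cases p)
          then have "i \<in> L" using pH unfolding L_def by auto
          moreover have "j \<notin> L" using noLL pH p by blast
          moreover have "(i,j) \<in> E" using pH p assms(4) by blast
          ultimately show "p \<in> G_LR E L (- L)" unfolding G_LR_def p by simp
        qed
        show "G_LR E L (- L) \<subseteq> H"
        proof
          fix p assume "p \<in> G_LR E L (- L)"
          then obtain i j where p: "p = (i,j)" "(i,j) \<in> E" "i \<in> L" "j \<notin> L"
            unfolding G_LR_def by auto
          then have "c$i - c$j = 1" using cval[of i] cval[of j] by simp
          then show "p \<in> H" using cEH p by blast
        qed
      qed
      moreover have "L \<inter> - L = {}" "L \<union> - L = UNIV" by auto
      ultimately show ?thesis using conH by blast
    qed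
  next
    assume B: "un_connected H \<and> (\<exists>L R. L \<inter> R = {} \<and> L \<union> R = UNIV \<and> H = G_LR E L R)"
    then obtain L R where LR: "L \<inter> R = {}" "L \<union> R = UNIV" "H = G_LR E L R" and conH: "un_connected H"
      by blast
    show "is_facet F P \<and> 0 \<notin> F"
    proof (cases "H = {}")
      case True
      then have eq: "u = v" for u v :: 'n using conH unfolding un_connected_def by auto
      have "E = {}"
      proof (rule ccontr)
        assume "E \<noteq> {}"
        then obtain i j where ij: "(i,j) \<in> E" by auto
        then have "i < j" using assms(1) unfolding dag_ordered_def by auto
        then show False using eq[of i j] by simp
      qed
      then have "P = {0}" unfolding P_def VV_def by simp
      moreover have "F = {}" using True unfolding F_def VV_def by simp
      ultimately show ?thesis unfolding is_facet_def by simp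
    next
      case False
      define c :: "real^'n::{finite,linorder}" where "c = (\<chi> k. if k \<in> L then 1 else 0)"
      have cE: "c$i - c$j \<le> 1" for i j by (simp add: c_def)
      have cEH: "(i,j) \<in> H \<longleftrightarrow> c$i - c$j = 1" if "(i,j) \<in> E" for i j
      proof -
        have jR: "j \<in> R \<longleftrightarrow> j \<notin> L" using LR(1,2) by blast
        have "(i,j) \<in> H \<longleftrightarrow> i \<in> L \<and> j \<notin> L" using that jR unfolding LR(3) G_LR_def by simp
        moreover have "c$i - c$j = 1 \<longleftrightarrow> i \<in> L \<and> j \<notin> L" by (simp add: c_def)
        ultimately show ?thesis by simp
      qed
      have gc: "c \<bullet> x \<le> 1" if xin: "x \<in> insert 0 (VV E)" for x
      proof (cases "x = 0")
        case True then show ?thesis by simp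
      next
        case False
        then obtain i j where "x = axis i 1 - axis j 1" using xin unfolding VV_def by auto
        then show ?thesis using cE[of i j] by (simp add: inner_gen)
      qed
      have Pc: "P \<subseteq> {x. c \<bullet> x \<le> 1}" unfolding P_def
        using gc by (intro hull_minimal) (auto simp: convex_halfspace_le)
      define T where "T = P \<inter> {x. c \<bullet> x = 1}"
      have fT: "T face_of P" unfolding T_def
      proof (rule face_of_Int_supporting_hyperplane_le)
        show "convex P" unfolding P_def by (rule convex_convex_hull)
        show "\<And>x. x \<in> P \<Longrightarrow> c \<bullet> x \<le> 1" using Pc by blast
      qed
      have VHc: "VV H \<subseteq> {x. c \<bullet> x = 1}"
      proof
        fix x assume "x \<in> VV H"
        then obtain i j where ij: "(i,j) \<in> H" "x = axis i 1 - axis j 1" unfolding VV_def by auto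
        then have "(i,j) \<in> E" using assms(4) by blast
        then have "c$i - c$j = 1" using cEH ij(1) by blast
        then show "x \<in> {x. c \<bullet> x = 1}" using ij(2) by (simp add: inner_gen)
      qed
      have "F = T"
      proof
        have "VV H \<subseteq> T" unfolding T_def P_def using VHc VHsub hull_subset[of "insert 0 (VV E)" convex] by blast
        moreover have "convex T" unfolding T_def P_def
          by (intro convex_Int convex_convex_hull convex_hyperplane)
        ultimately show "F \<subseteq> T" unfolding F_def by (intro hull_minimal)
      next
        have "compact (insert 0 (VV E))" by (simp add: VV_finite finite_imp_compact)
        then obtain S' where S': "S' \<subseteq> insert 0 (VV E)" "T = convex hull S'"
          by (rule face_of_convex_hull_subset[OF _ fT[unfolded P_def]])
        have "S' \<subseteq> VV H"
        proof
          fix s assume s: "s \<in> S'"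
          then have "s \<in> T" using S'(2) hull_subset[of S' convex] by blast
          then have sc: "c \<bullet> s = 1" unfolding T_def by simp
          then have "s \<noteq> 0" by auto
          then obtain i j where ij: "(i,j) \<in> E" "s = axis i 1 - axis j 1"
            using s S' unfolding VV_def by auto
          then have "c$i - c$j = 1" using sc by (simp add: inner_gen)
          then have "(i,j) \<in> H" using cEH ij(1) by blast
          then show "s \<in> VV H" using ij unfolding VV_def by force
        qed
        then show "T \<subseteq> F" unfolding F_def S' by (rule hull_mono)
      qed
      have affF: "aff_dim F = int (dim (VV H)) - 1"
        unfolding F_def aff_dim_convex_hull using VHc by (rule aff_dim_hyp)
      have "F \<subseteq> {x. c \<bullet> x = 1}" using \<open>F = T\<close> T_def by auto
      then have "0 \<notin> F" by auto
      moreover have "aff_dim F = aff_dim P - 1"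
        using affF affP dim_conn[OF conH] by simp
      ultimately show ?thesis unfolding is_facet_def using fT \<open>F = T\<close> by simp
    qed
  qed
qed

end
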